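(* Under the standing assumption, no two distinct small tiles touch, i.e. any two distinct small tiles are disjoint.
   Context: Standing assumption: let $n\ge 2$ and $0<p<q$ be real numbers. A tiling of $\mathbb{R}^n$ is a family of closed sets (tiles) whose union is $\mathbb{R}^n$ and whose pairwise intersections have Lebesgue measure zero. There are an invertible real $n\times n$ matrix $B$, an axis-parallel closed cube $S_0$ of side length $p$ and an axis-parallel closed cube $T_0$ of side length $q$ such that the family $\{S_0+Bz: z\in\mathbb{Z}^n\}\cup\{T_0+Bz: z\in\mathbb{Z}^n\}$ is a tiling of $\mathbb{R}^n$, and this tiling is unilateral, i.e. no two distinct tiles of the same side length share a full facet. Tiles of side length $p$ are called small, tiles of side length $q$ big. Two tiles touch if they intersect; they properly touch if their intersection has positive $(n-1)$-dimensional Lebesgue measure. *)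

theory Defs
  imports "HOL-Analysis.Analysis"
begin

definition cube :: "real^'n \<Rightarrow> real \<Rightarrow> (real^'n) set" where
  "cube a s = {x. \<forall>i. a$i \<le> x$i \<and> x$i \<le> a$i + s}"

definition latvec :: "real^'n^'n \<Rightarrow> int^'n \<Rightarrow> real^'n" where
  "latvec B z = B *v (\<chi> i. of_int (z$i))"

definition lattice_translates :: "real^'n^'n \<Rightarrow> (real^'n) set \<Rightarrow> (real^'n) set set" where
  "lattice_translates B S = {(\<lambda>x. latvec B z + x) ` S | z. True}"

definition is_tiling :: "(real^'n) set set \<Rightarrow> bool" where
  "is_tiling F \<longleftrightarrow> (\<forall>T\<in>F. closed T) \<and> \<Union>F = UNIV \<and>
     (\<forall>T\<in>F. \<forall>T'\<in>F. T \<noteq> T' \<longrightarrow> negligible (T \<inter> T'))"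

definition share_facet :: "(real^'n) set \<Rightarrow> (real^'n) set \<Rightarrow> bool" where
  "share_facet X Y \<longleftrightarrow> (\<exists>F. F facet_of X \<and> F facet_of Y)"

definition no_shared_facets :: "(real^'n) set set \<Rightarrow> bool" where
  "no_shared_facets F \<longleftrightarrow> (\<forall>X\<in>F. \<forall>Y\<in>F. X \<noteq> Y \<longrightarrow> \<not> share_facet X Y)"

end

theory Submission
  imports Defs
begin

lemma mem_trans_cube: "x \<in> (\<lambda>x. u + x) ` cube a s \<longleftrightarrow> (\<forall>i. a$i + u$i \<le> x$i \<and> x$i \<le> a$i + u$i + s)"
proof
  assume "x \<in> (\<lambda>x. u + x) ` cube a s"
  then obtain y where "y \<in> cube a s" "x = u + y" by auto
  then show "\<forall>i. a$i + u$i \<le> x$i \<and> x$i \<le> a$i + u$i + s" by (auto simp: cube_def)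
next
  assume h: "\<forall>i. a$i + u$i \<le> x$i \<and> x$i \<le> a$i + u$i + s"
  have "x - u \<in> cube a s" using h unfolding cube_def by (smt (verit) mem_Collect_eq vector_minus_component)
  moreover have "x = u + (x - u)" by simp
  ultimately show "x \<in> (\<lambda>x. u + x) ` cube a s" by blast
qed

theorem lemma3:
  fixes p q :: real and B :: "real^'n^'n" and a b :: "real^'n"
  assumes "CARD('n) \<ge> 2"
    and "0 < p" and "p < q"
    and "invertible B"
    and "is_tiling (lattice_translates B (cube a p) \<union> lattice_translates B (cube b q))"
    and "no_shared_facets (lattice_translates B (cube a p))"
    and "no_shared_facets (lattice_translates B (cube b q))"
  shows "\<forall>X\<in>lattice_translates B (cube a p). \<forall>Y\<in>lattice_translates B (cube a p).
           X \<noteq> Y \<longrightarrow> X \<inter> Y = {}"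
proof (intro ballI impI)
  fix X Y assume X: "X \<in> lattice_translates B (cube a p)" and Y: "Y \<in> lattice_translates B (cube a p)"
    and XY: "X \<noteq> Y"
  from X obtain zx where zx: "X = (\<lambda>x. latvec B zx + x) ` cube a p" by (auto simp: lattice_translates_def)
  from Y obtain zy where zy: "Y = (\<lambda>x. latvec B zy + x) ` cube a p" by (auto simp: lattice_translates_def)
  define u where "u = latvec B zx"
  define w where "w = latvec B zy"
  have uw: "u \<noteq> w" using XY zx zy u_def w_def by auto
  show "X \<inter> Y = {}"
  proof (rule ccontr)
    assume "X \<inter> Y \<noteq> {}"
    then obtain x where "x \<in> X" "x \<in> Y" by auto
    then have hx: "\<forall>i. a$i + u$i \<le> x$i \<and> x$i \<le> a$i + u$i + p" "\<forall>i. a$i + w$i \<le> x$i \<and> x$i \<le> a$i + w$i + p"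
      using zx zy u_def w_def mem_trans_cube by blast+
    have d: "\<bar>u$i - w$i\<bar> \<le> p" for i using hx[THEN spec[of _ i]] by auto
    define TX where "TX = (\<lambda>x. u + x) ` cube b q"
    define TY where "TY = (\<lambda>x. w + x) ` cube b q"
    have TXin: "TX \<in> lattice_translates B (cube b q)" unfolding TX_def u_def lattice_translates_def by blast
    have TYin: "TY \<in> lattice_translates B (cube b q)" unfolding TY_def w_def lattice_translates_def by blast
    have TXY: "TX \<noteq> TY"
    proof
      assume eq: "TX = TY"
      have "b + u \<in> TX" unfolding TX_def mem_trans_cube using assms(2,3) by simp
      hence "b + u \<in> TY" using eq by simp
      hence 1: "\<forall>i. w$i \<le> u$i" unfolding TY_def mem_trans_cube by simp
      have "b + w \<in> TY" unfolding TY_def mem_trans_cube using assms(2,3) by simp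
      hence "b + w \<in> TX" using eq by simp
      hence 2: "\<forall>i. u$i \<le> w$i" unfolding TX_def mem_trans_cube by simp
      from 1 2 have "u = w" by (metis order_antisym vec_eq_iff)
      with uw show False by simp
    qed
    have "negligible (TX \<inter> TY)" using assms(5) TXin TYin TXY unfolding is_tiling_def by blast
    define c :: "real^'n" where "c = (\<chi> i. b$i + max (u$i) (w$i))"
    define e :: "real^'n" where "e = (\<chi> i. b$i + min (u$i) (w$i) + q)"
    have sub: "box c e \<subseteq> TX \<inter> TY"
    proof
      fix y assume "y \<in> box c e"
      hence "\<forall>i. c$i < y$i \<and> y$i < e$i" by (simp add: mem_box_cart)
      hence "\<forall>i. b$i + max (u$i) (w$i) < y$i \<and> y$i < b$i + min (u$i) (w$i) + q"
        by (simp add: c_def e_def)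
      thus "y \<in> TX \<inter> TY" unfolding TX_def TY_def mem_trans_cube Int_iff
        by (smt (verit))
    qed
    have "negligible (box c e)" using negligible_subset sub \<open>negligible (TX \<inter> TY)\<close> by blast
    hence "box c e = {}" using negligible_interval(2) by blast
    moreover have "(1/2) *\<^sub>R (c + e) \<in> box c e"
    proof -
      have "c$i < e$i" for i using d[of i] assms(3) by (simp add: c_def e_def min_def) linarith
      thus ?thesis by (simp add: mem_box_cart)
    qed
    ultimately show False by simp
  qed
qed

end
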